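(* Let $w\ge 1$ and let $G$ be a graph of modular width at most $w$. Then every shortest path in $G$ has length at most $w$. Moreover, if $|V(G)|>w$ and $V_1,\dots,V_r$ ($r\le w$) is a modular decomposition of $G$, then every shortest path in $G$ of length at least three is either fully contained in some $G[V_i]$, or contains at most one vertex from each $V_i$, $i\in[r]$.
   Context: All graphs are finite, simple and undirected; the length of a path is its number of edges. A module of $G$ is a set $M\subseteq V(G)$ such that for all $u,v\in M$ and $x\in V(G)\setminus M$, $\{u,x\}\in E(G)$ implies $\{v,x\}\in E(G)$. A graph $G$ has modular width at most $w$ if either $|V(G)|\le w$, or there is a partition of $V(G)$ into at most $w$ sets $V_1,\dots,V_r$ such that each $V_i$ is a module of $G$ and each $G[V_i]$ has modular width at most $w$. A modular decomposition of $G$ (with respect to $w$) is a non-trivial partition of $V(G)$ into at most $w$ sets $V_1,\dots,V_r$, each a module of $G$ with $G[V_i]$ of modular width at most $w$. *)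

theory Defs
  imports Main
begin

text \<open>A finite simple undirected graph is given by a finite vertex set V and a
symmetric irreflexive adjacency relation E; only edges between vertices of V matter.
The induced subgraph G[S] for S \<subseteq> V is (S, E).\<close>

definition graph :: "'a set \<Rightarrow> ('a \<Rightarrow> 'a \<Rightarrow> bool) \<Rightarrow> bool" where
  "graph V E \<longleftrightarrow> finite V \<and> (\<forall>x y. E x y \<longrightarrow> E y x) \<and> (\<forall>x. \<not> E x x)"

definition is_module :: "'a set \<Rightarrow> ('a \<Rightarrow> 'a \<Rightarrow> bool) \<Rightarrow> 'a set \<Rightarrow> bool" where
  "is_module V E M \<longleftrightarrow> M \<subseteq> V \<and>
     (\<forall>u\<in>M. \<forall>v\<in>M. \<forall>x\<in>V - M. E u x \<longrightarrow> E v x)"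

definition is_partition :: "'a set set \<Rightarrow> 'a set \<Rightarrow> bool" where
  "is_partition P V \<longleftrightarrow> \<Union>P = V \<and> (\<forall>A\<in>P. A \<noteq> {}) \<and>
     (\<forall>A\<in>P. \<forall>B\<in>P. A \<noteq> B \<longrightarrow> A \<inter> B = {})"

inductive mw_le :: "nat \<Rightarrow> ('a \<Rightarrow> 'a \<Rightarrow> bool) \<Rightarrow> 'a set \<Rightarrow> bool"
  for w :: nat and E :: "'a \<Rightarrow> 'a \<Rightarrow> bool" where
  small: "finite V \<Longrightarrow> card V \<le> w \<Longrightarrow> mw_le w E V"
| decomp: "is_partition P V \<Longrightarrow> finite P \<Longrightarrow> card P \<le> w \<Longrightarrow>
     (\<forall>M\<in>P. is_module V E M \<and> mw_le w E M) \<Longrightarrow> mw_le w E V"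

definition modular_decomposition ::
  "nat \<Rightarrow> 'a set \<Rightarrow> ('a \<Rightarrow> 'a \<Rightarrow> bool) \<Rightarrow> 'a set set \<Rightarrow> bool" where
  "modular_decomposition w V E P \<longleftrightarrow> is_partition P V \<and> finite P \<and>
     2 \<le> card P \<and> card P \<le> w \<and> (\<forall>M\<in>P. is_module V E M \<and> mw_le w E M)"

definition is_path :: "'a set \<Rightarrow> ('a \<Rightarrow> 'a \<Rightarrow> bool) \<Rightarrow> 'a list \<Rightarrow> bool" where
  "is_path V E ps \<longleftrightarrow> ps \<noteq> [] \<and> distinct ps \<and> set ps \<subseteq> V \<and>
     (\<forall>i. Suc i < length ps \<longrightarrow> E (ps ! i) (ps ! Suc i))"

definition path_len :: "'a list \<Rightarrow> nat" where
  "path_len ps = length ps - 1"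

definition shortest_path :: "'a set \<Rightarrow> ('a \<Rightarrow> 'a \<Rightarrow> bool) \<Rightarrow> 'a list \<Rightarrow> bool" where
  "shortest_path V E ps \<longleftrightarrow> is_path V E ps \<and>
     (\<forall>qs. is_path V E qs \<and> hd qs = hd ps \<and> last qs = last ps \<longrightarrow> path_len ps \<le> path_len qs)"

end

theory Submission
  imports Defs
begin

lemma shortcut:
  assumes g: "graph V E" and sp: "shortest_path V E ps"
    and ab: "a + 1 < b" and bl: "b < length ps" and e: "E (ps!a) (ps!b)"
  shows False
proof -
  define qs where "qs = take (a+1) ps @ drop b ps"
  have p: "is_path V E ps" using sp unfolding shortest_path_def by blast
  have lq: "length qs = a + 1 + (length ps - b)" using ab bl unfolding qs_def by simp
  have qnth: "\<And>i. i < length qs \<Longrightarrow> qs ! i = (if i \<le> a then ps ! i else ps ! (b + i - a - 1))"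
    using ab bl unfolding qs_def by (auto simp: nth_append)
  have "distinct qs"
  proof -
    have "set (take (a+1) ps) \<inter> set (drop b ps) = {}"
      using p ab unfolding is_path_def
      by (intro set_take_disj_set_drop_if_distinct) auto
    moreover have "distinct ps" using p unfolding is_path_def by blast
    ultimately show ?thesis unfolding qs_def by (simp add: distinct_append)
  qed
  moreover have "set qs \<subseteq> V" using p unfolding qs_def is_path_def
    using set_take_subset[of "a+1" ps] set_drop_subset[of b ps] by auto
  moreover have "qs \<noteq> []" using lq by auto
  moreover have "\<forall>i. Suc i < length qs \<longrightarrow> E (qs ! i) (qs ! Suc i)"
  proof (intro allI impI)
    fix i assume i: "Suc i < length qs"
    show "E (qs ! i) (qs ! Suc i)"
    proof (cases "i < a")
      case True
      then show ?thesis using qnth[of i] qnth[of "Suc i"] i p ab bl unfolding is_path_def by auto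
    next
      case False
      show ?thesis
      proof (cases "i = a")
        case True
        then show ?thesis using qnth[of i] qnth[of "Suc i"] i e by auto
      next
        case F2: False
        have "Suc (b + i - a - 1) < length ps" using i lq False F2 ab by auto
        moreover have "b + Suc i - a - 1 = Suc (b + i - a - 1)" using False F2 ab by auto
        ultimately show ?thesis using qnth[of i] qnth[of "Suc i"] i p False F2
          unfolding is_path_def by auto
      qed
    qed
  qed
  ultimately have qp: "is_path V E qs" unfolding is_path_def by blast
  have "hd qs = hd ps" unfolding qs_def using ab bl by (simp add: hd_append)
  moreover have "last qs = last ps" unfolding qs_def using ab bl by simp
  ultimately have "path_len ps \<le> path_len qs" using sp qp unfolding shortest_path_def by blast
  then show False using lq ab bl unfolding path_len_def by auto
qed

lemma induced:
  assumes g: "graph V E" and sp: "shortest_path V E ps"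
    and al: "a < length ps" and bl: "b < length ps" and e: "E (ps!a) (ps!b)"
  shows "a \<le> b + 1 \<and> b \<le> a + 1"
proof -
  have e2: "E (ps!b) (ps!a)" using g e unfolding graph_def by blast
  have "\<not> a + 1 < b" using shortcut[OF g sp _ bl e] by blast
  moreover have "\<not> b + 1 < a" using shortcut[OF g sp _ al e2] by blast
  ultimately show ?thesis by linarith
qed

lemma all_same:
  assumes "\<forall>m. Suc m < n \<longrightarrow> (f m \<longleftrightarrow> f (Suc m))"
  shows "\<forall>m < n. f m = f 0"
proof (intro allI impI)
  fix m assume "m < n" then show "f m = f 0"
    by (induction m) (use assms in auto)
qed

lemma module_lemma:
  assumes g: "graph V E" and sp: "shortest_path V E ps" and l3: "3 \<le> path_len ps"
    and mod: "is_module V E M" and ns: "\<not> set ps \<subseteq> M"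
  shows "card (set ps \<inter> M) \<le> 1"
proof (rule ccontr)
  have p: "is_path V E ps" using sp unfolding shortest_path_def by blast
  have dist: "distinct ps" and sV: "set ps \<subseteq> V" using p unfolding is_path_def by auto
  have len: "4 \<le> length ps" using l3 unfolding path_len_def by auto
  have C: "b = i + 1 \<and> j = i + 2"
    if "a < length ps" "b < length ps" "ps!a \<in> M" "ps!b \<notin> M" "E (ps!a) (ps!b)"
       "i < j" "j < length ps" "ps!i \<in> M" "ps!j \<in> M" for a b i j
  proof -
    have "ps!b \<in> V - M" using that sV by auto
    then have "E (ps!i) (ps!b)" "E (ps!j) (ps!b)" using mod that unfolding is_module_def by blast+
    then have "i \<le> b + 1 \<and> b \<le> i + 1" "j \<le> b + 1 \<and> b \<le> j + 1"
      using induced[OF g sp] that by auto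
    moreover have "b \<noteq> i" "b \<noteq> j" using that by auto
    ultimately show ?thesis using that by linarith
  qed
  assume nc: "\<not> card (set ps \<inter> M) \<le> 1"
  obtain x y where xy: "x \<in> set ps \<inter> M" "y \<in> set ps \<inter> M" "x \<noteq> y"
    using nc card_le_Suc0_iff_eq[of "set ps \<inter> M"] by auto
  then obtain i0 j0 where ij0: "i0 < length ps" "j0 < length ps" "ps!i0 = x" "ps!j0 = y"
    by (auto simp: in_set_conv_nth)
  have "i0 \<noteq> j0" using ij0 xy by auto
  then obtain i j where ij: "i < j" "j < length ps" "ps!i \<in> M" "ps!j \<in> M"
  proof (cases "i0 < j0")
    case True then show ?thesis using that[of i0 j0] ij0 xy by auto
  next
    case False then show ?thesis using that[of j0 i0] ij0 xy \<open>i0 \<noteq> j0\<close> by auto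
  qed
  obtain z where z: "z \<in> set ps" "z \<notin> M" using ns by auto
  then obtain l where l: "l < length ps" "ps!l \<notin> M" by (auto simp: in_set_conv_nth)
  have "\<exists>m. Suc m < length ps \<and> \<not> (ps!m \<in> M \<longleftrightarrow> ps!Suc m \<in> M)"
  proof (rule ccontr)
    assume "\<not> ?thesis"
    then have "\<forall>m < length ps. (ps!m \<in> M) = (ps!0 \<in> M)"
      using all_same[of "length ps" "\<lambda>m. ps!m \<in> M"] by blast
    then show False using l ij by auto
  qed
  then obtain m where m: "Suc m < length ps" "\<not> (ps!m \<in> M \<longleftrightarrow> ps!Suc m \<in> M)" by blast
  have Em: "E (ps!m) (ps!Suc m)" "E (ps!Suc m) (ps!m)"
    using p m g unfolding is_path_def graph_def by blast+
  obtain a b where ab: "a < length ps" "b < length ps" "ps!a \<in> M" "ps!b \<notin> M" "E (ps!a) (ps!b)"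
  proof (cases "ps!m \<in> M")
    case True then show ?thesis using that[of m "Suc m"] m Em by auto
  next
    case False then show ?thesis using that[of "Suc m" m] m Em by auto
  qed
  note CC = C[OF ab]
  have ji: "j = i + 2" and bi: "b = i + 1" using CC[OF ij] by auto
  show False
  proof (cases "i + 3 < length ps")
    case True
    show False
    proof (cases "ps!(i+3) \<in> M")
      case True
      then show False using CC[of i "i+3"] \<open>i+3 < length ps\<close> ij by auto
    next
      case False
      have "E (ps!(i+2)) (ps!Suc (i+2))" using p True unfolding is_path_def by auto
      then have "E (ps!(i+2)) (ps!(i+3))" by (simp add: numeral_3_eq_3)
      then show False using C[of "i+2" "i+3", OF _ True _ False _ ij] True ij ji by auto
    qed
  next
    case False
    then have i1: "i \<ge> 1" using len ij ji by auto
    show False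
    proof (cases "ps!(i-1) \<in> M")
      case True
      have "i - 1 < j" using ij by auto
      from CC[OF this ij(2) True ij(4)] show False using i1 ji by auto
    next
      case F: False
      have "E (ps!i) (ps!(i-1))"
      proof -
        have "Suc (i-1) < length ps" using i1 ij by auto
        then have "E (ps!(i-1)) (ps!Suc (i-1))" using p unfolding is_path_def by blast
        then have "E (ps!(i-1)) (ps!i)" using i1 by simp
        then show ?thesis using g i1 unfolding graph_def by auto
      qed
      moreover have "i - 1 < length ps" "i < length ps" using ij by auto
      ultimately show False using C[of i "i-1", OF _ _ _ F _ ij] ij i1 by auto
    qed
  qed
qed

lemma sub_graph: "graph V E \<Longrightarrow> M \<subseteq> V \<Longrightarrow> graph M E"
  unfolding graph_def using finite_subset by blast

lemma sub_shortest:
  assumes "shortest_path V E ps" "set ps \<subseteq> M" "M \<subseteq> V"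
  shows "shortest_path M E ps"
proof -
  have p: "is_path V E ps" using assms(1) unfolding shortest_path_def by blast
  have "is_path M E ps" using p assms(2) unfolding is_path_def by blast
  moreover have "is_path V E qs" if "is_path M E qs" for qs
    using that assms(3) unfolding is_path_def by blast
  ultimately show ?thesis using assms(1) unfolding shortest_path_def by blast
qed

lemma len_card: "is_path V E ps \<Longrightarrow> path_len ps + 1 = card (set ps)"
  unfolding is_path_def path_len_def by (simp add: distinct_card)

lemma part_card:
  assumes g: "graph V E" and sp: "shortest_path V E ps" and l3: "3 \<le> path_len ps"
    and part: "is_partition P V" and fin: "finite P" and mods: "\<forall>M\<in>P. is_module V E M"
    and ns: "\<not> (\<exists>M\<in>P. set ps \<subseteq> M)"
  shows "path_len ps + 1 \<le> card P"
proof -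
  have p: "is_path V E ps" using sp unfolding shortest_path_def by blast
  have "set ps = (\<Union>M\<in>P. set ps \<inter> M)" using part p unfolding is_partition_def is_path_def by auto
  then have "card (set ps) \<le> (\<Sum>M\<in>P. card (set ps \<inter> M))"
    using card_UN_le[OF fin, of "\<lambda>M. set ps \<inter> M"] by simp
  also have "\<dots> \<le> (\<Sum>M\<in>P. 1)"
  proof (rule sum_mono)
    fix M assume "M \<in> P"
    then show "card (set ps \<inter> M) \<le> 1" using module_lemma[OF g sp l3] mods ns by blast
  qed
  finally show ?thesis using len_card[OF p] by simp
qed

lemma part1:
  assumes "mw_le w E V" "graph V E" "1 \<le> w" "shortest_path V E ps"
  shows "path_len ps \<le> w"
  using assms
proof (induction arbitrary: ps rule: mw_le.induct)
  case (small V)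
  have p: "is_path V E ps" using small unfolding shortest_path_def by blast
  then have "card (set ps) \<le> card V" using small card_mono unfolding is_path_def by blast
  then show ?case using len_card[OF p] small by simp
next
  case (decomp P V)
  have p: "is_path V E ps" using decomp unfolding shortest_path_def by blast
  show ?case
  proof (cases "\<exists>M\<in>P. set ps \<subseteq> M")
    case True
    then obtain M where M: "M \<in> P" "set ps \<subseteq> M" by blast
    have MV: "M \<subseteq> V" using decomp M unfolding is_module_def by blast
    show ?thesis using decomp.IH M sub_graph[OF decomp.prems(1) MV]
        sub_shortest[OF decomp.prems(3) M(2) MV] decomp.prems(2) by blast
  next
    case False
    show ?thesis
    proof (cases "3 \<le> path_len ps")
      case True
      then show ?thesis using part_card[OF decomp.prems(1) decomp.prems(3) True decomp.hyps(1,2) _ False]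
        decomp.IH decomp.hyps(3) by auto
    next
      case F3: False
      obtain x where x: "x \<in> set ps" using p unfolding is_path_def by fastforce
      have UP: "\<Union>P = V" using decomp.hyps(1) unfolding is_partition_def by blast
      have sV: "set ps \<subseteq> V" using p unfolding is_path_def by blast
      from x sV UP obtain M1 where M1: "M1 \<in> P" "x \<in> M1" by blast
      then obtain y where y: "y \<in> set ps" "y \<notin> M1" using False by blast
      from y sV UP obtain M2 where M2: "M2 \<in> P" "y \<in> M2" by blast
      have "M1 \<noteq> M2" using M1 M2 y by blast
      then have "card {M1, M2} \<le> card P" using M1 M2 decomp.hyps(2) by (intro card_mono) auto
      then have "2 \<le> card P" using \<open>M1 \<noteq> M2\<close> by simp
      then show ?thesis using F3 decomp.hyps(3) by linarith
    qed
  qed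
qed

theorem proposition27:
  fixes V :: "'a set" and E :: "'a \<Rightarrow> 'a \<Rightarrow> bool" and w :: nat
  assumes "1 \<le> w" and "graph V E" and "mw_le w E V"
  shows "(\<forall>ps. shortest_path V E ps \<longrightarrow> path_len ps \<le> w) \<and>
         (w < card V \<longrightarrow>
           (\<forall>P. modular_decomposition w V E P \<longrightarrow>
             (\<forall>ps. shortest_path V E ps \<and> 3 \<le> path_len ps \<longrightarrow>
                (\<exists>M\<in>P. set ps \<subseteq> M) \<or> (\<forall>M\<in>P. card (set ps \<inter> M) \<le> 1))))"
proof (intro conjI allI impI)
  fix ps assume "shortest_path V E ps"
  then show "path_len ps \<le> w" using part1[OF assms(3,2,1)] by blast
next
  fix P ps assume md: "modular_decomposition w V E P" and h: "shortest_path V E ps \<and> 3 \<le> path_len ps"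
  show "(\<exists>M\<in>P. set ps \<subseteq> M) \<or> (\<forall>M\<in>P. card (set ps \<inter> M) \<le> 1)"
  proof (cases "\<exists>M\<in>P. set ps \<subseteq> M")
    case False
    have "card (set ps \<inter> M) \<le> 1" if "M \<in> P" for M
    proof -
      have "is_module V E M" using md that unfolding modular_decomposition_def by blast
      moreover have "\<not> set ps \<subseteq> M" using False that by blast
      ultimately show ?thesis using module_lemma[OF assms(2)] h by blast
    qed
    then show ?thesis by blast
  qed blast
qed

end
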